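(* Let $\ell\le d\le n/2$ and suppose $d$ is known in advance to the algorithm. Any non-adaptive randomized group testing algorithm that, for every defective set $I\subseteq[n]$ of size $d$, with probability at least $2/3$ detects $\ell$ defective items must make at least $\ell\log(n/d)-1$ tests.
   Context: Group testing: items $X=[n]$, unknown defective set $I\subseteq X$ with $d=|I|$. A test $Q\subseteq X$ has answer $1$ if $Q\cap I\neq\emptyset$ and $0$ otherwise. A non-adaptive (randomized) algorithm chooses all its tests before seeing any answer, then computes its output from the answers. "Detects $\ell$ defective items" means it outputs $L\subseteq I$ with $|L|=\ell$. "$d$ is known in advance" means the algorithm is given an integer $D$ with $d/4\le D\le 4d$ (in particular, the bound applies when $d$ is given exactly). Logarithms are base 2. *)

theory Defs
  imports "HOL-Probability.Probability"
begin

definition test_answer :: "nat set \<Rightarrow> nat set \<Rightarrow> bool" where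
  "test_answer I Q \<longleftrightarrow> Q \<inter> I \<noteq> {}"

text \<open>A deterministic non-adaptive algorithm: a list of tests, chosen in advance,
  and a decoder mapping the vector of answers to an output set.\<close>
type_synonym na_alg = "nat set list \<times> (bool list \<Rightarrow> nat set)"

definition run_alg :: "na_alg \<Rightarrow> nat set \<Rightarrow> nat set" where
  "run_alg A I = snd A (map (test_answer I) (fst A))"

definition detects :: "nat \<Rightarrow> nat set \<Rightarrow> nat set \<Rightarrow> bool" where
  "detects l I L \<longleftrightarrow> L \<subseteq> I \<and> card L = l"

text \<open>A randomized non-adaptive algorithm is a probability distribution over
  deterministic non-adaptive algorithms (the random seed is drawn first, then all
  tests are fixed before any answer is seen).\<close>

end

theory Submission
  imports Defs
begin

lemma avg_lemma:
  fixes R :: "'a pmf" and S :: "'b set" and G :: "'b \<Rightarrow> 'a set" and K :: real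
  assumes "finite S" and "\<forall>I\<in>S. measure_pmf.prob R (G I) \<ge> c"
  and "\<forall>A \<in> set_pmf R. real (card {I\<in>S. A \<in> G I}) \<le> K"
  shows "real (card S) * c \<le> K"
proof -
  define f where "f A = (\<Sum>I\<in>S. indicator (G I) A :: real)" for A
  have fc: "f A = real (card {I\<in>S. A \<in> G I})" for A
    unfolding f_def indicator_def using assms(1)
    by (simp add: sum.If_cases Int_def)
  have int: "integrable (measure_pmf R) (\<lambda>A. indicator (G I) A :: real)" for I
    by (intro integrable_real_indicator) (auto simp: measure_pmf.emeasure_eq_measure)
  have intf: "integrable (measure_pmf R) f" unfolding f_def by (rule Bochner_Integration.integrable_sum) (rule int)
  have "real (card S) * c = (\<Sum>I\<in>S. c)" by simp
  also have "\<dots> \<le> (\<Sum>I\<in>S. measure_pmf.prob R (G I))" using assms(2) by (intro sum_mono) auto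
  also have "\<dots> = (\<Sum>I\<in>S. integral\<^sup>L R (indicator (G I)))" by simp
  also have "\<dots> = integral\<^sup>L R f" unfolding f_def
    using Bochner_Integration.integral_sum[where I=S and M="measure_pmf R" and f="\<lambda>I A. indicator (G I) A", OF int] by simp
  also have "\<dots> \<le> integral\<^sup>L R (\<lambda>_. K)"
    by (rule integral_mono_AE) (auto simp: intf AE_measure_pmf_iff fc assms(3))
  also have "\<dots> = K" by simp
  finally show ?thesis .
qed

lemma supersets_card:
  fixes L :: "nat set"
  assumes "card L = l" "l \<le> d" "d \<le> n"
  shows "card {I. I \<subseteq> {1..n} \<and> card I = d \<and> L \<subseteq> I} \<le> (n - l) choose (d - l)"
proof (cases "L \<subseteq> {1..n}")
  case False
  then have "{I. I \<subseteq> {1..n} \<and> card I = d \<and> L \<subseteq> I} = {}" by auto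
  then show ?thesis by (metis card.empty le0)
next
  case True
  have fL: "finite L" using True finite_subset by blast
  have cX: "card ({1..n} - L) = n - l" using True fL assms(1) by (simp add: card_Diff_subset)
  have "card {I. I \<subseteq> {1..n} \<and> card I = d \<and> L \<subseteq> I}
      \<le> card {B. B \<subseteq> {1..n} - L \<and> card B = d - l}"
  proof (rule card_inj_on_le[where f = "\<lambda>I. I - L"])
    show "inj_on (\<lambda>I. I - L) {I. I \<subseteq> {1..n} \<and> card I = d \<and> L \<subseteq> I}"
      by (rule inj_onI) blast
    show "(\<lambda>I. I - L) ` {I. I \<subseteq> {1..n} \<and> card I = d \<and> L \<subseteq> I}
          \<subseteq> {B. B \<subseteq> {1..n} - L \<and> card B = d - l}"
    proof clarify
      fix I assume "I \<subseteq> {1..n}" "d = card I" "L \<subseteq> I"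
      then show "I - L \<subseteq> {1..n} - L \<and> card (I - L) = card I - l"
        using assms(1) fL by (auto simp: card_Diff_subset)
    qed
    show "finite {B. B \<subseteq> {1..n} - L \<and> card B = d - l}" by simp
  qed
  also have "\<dots> = (n - l) choose (d - l)" by (subst n_subsets, simp, subst cX, rule refl)
  finally show ?thesis .
qed

lemma binom_ratio:
  "l \<le> d \<Longrightarrow> d \<le> n \<Longrightarrow>
     (real n / real d) ^ l * real ((n - l) choose (d - l)) \<le> real (n choose d)"
proof (induction l arbitrary: n d)
  case 0
  then show ?case by simp
next
  case (Suc l)
  obtain d' where d': "d = Suc d'" using Suc.prems by (cases d) auto
  obtain n' where n': "n = Suc n'" using Suc.prems d' by (cases n) auto
  have IH: "(real n' / real d') ^ l * real ((n' - l) choose (d' - l)) \<le> real (n' choose d')"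
    using Suc.IH[of d' n'] Suc.prems d' n' by simp
  have abs: "real (Suc d') * real (n choose d) = real n * real (n' choose d')"
    using binomial_absorption[of d' n] n' d' by (metis of_nat_mult diff_Suc_1)
  have ratio: "(real n / real d) ^ l \<le> (real n' / real d') ^ l"
  proof (cases l)
    case 0 then show ?thesis by simp
  next
    case (Suc k)
    then have "d' \<ge> 1" using Suc.prems d' by simp
    moreover have "d' \<le> n'" using Suc.prems d' n' by simp
    ultimately have "real n / real d \<le> real n' / real d'"
      using d' n' by (simp add: field_simps)
    then show ?thesis by (intro power_mono) auto
  qed
  have "(real n / real d) ^ Suc l * real ((n - Suc l) choose (d - Suc l))
      = (real n / real d) * ((real n / real d) ^ l * real ((n' - l) choose (d' - l)))"
    using d' n' by simp
  also have "\<dots> \<le> (real n / real d) * ((real n' / real d') ^ l * real ((n' - l) choose (d' - l)))"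
    by (intro mult_left_mono mult_right_mono ratio) auto
  also have "\<dots> \<le> (real n / real d) * real (n' choose d')"
    by (intro mult_left_mono IH) auto
  also have "\<dots> = real (n choose d)" using abs d' by (simp add: field_simps)
  finally show ?case .
qed

theorem theorem12:
  fixes n d l m :: nat and R :: "na_alg pmf"
  assumes "l \<le> d" and "2 * d \<le> n"
    and tests_in_X: "\<forall>A \<in> set_pmf R. \<forall>Q \<in> set (fst A). Q \<subseteq> {1..n}"
    and num_tests: "\<forall>A \<in> set_pmf R. length (fst A) \<le> m"
    and success: "\<forall>I. I \<subseteq> {1..n} \<and> card I = d \<longrightarrow>
                    measure_pmf.prob R {A. detects l I (run_alg A I)} \<ge> 2/3"
  shows "real m \<ge> real l * log 2 (real n / real d) - 1"
proof (cases "l = 0")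
  case True
  then show ?thesis by simp
next
  case False
  then have dpos: "d > 0" using assms(1) by simp
  have dn: "d \<le> n" using assms(2) by simp
  define S where "S = {I. I \<subseteq> {1..n} \<and> card I = d}"
  define C where "C = (n - l) choose (d - l)"
  have finS: "finite S" unfolding S_def by simp
  have cardS: "card S = n choose d" unfolding S_def by (subst n_subsets) auto
  have bound: "real (card {I\<in>S. A \<in> {A. detects l I (run_alg A I)}}) \<le> real (2 ^ m * C)"
    if A: "A \<in> set_pmf R" for A
  proof -
    define V where "V = {v :: bool list. set v \<subseteq> UNIV \<and> length v = length (fst A)}"
    define T where "T = (\<lambda>L. {I. I \<subseteq> {1..n} \<and> card I = d \<and> L \<subseteq> I \<and> card L = l})"
    have finV: "finite V" unfolding V_def
      by (rule finite_lists_length_eq) simp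
    have cV: "card V = 2 ^ length (fst A)" unfolding V_def
      by (subst card_lists_length_eq) auto
    have sub: "{I\<in>S. A \<in> {A. detects l I (run_alg A I)}} \<subseteq> (\<Union>L\<in>snd A ` V. T L)"
    proof
      fix I assume "I \<in> {I\<in>S. A \<in> {A. detects l I (run_alg A I)}}"
      then have "I \<in> S" "detects l I (snd A (map (test_answer I) (fst A)))"
        by (auto simp: run_alg_def)
      moreover have "map (test_answer I) (fst A) \<in> V" unfolding V_def by simp
      ultimately show "I \<in> (\<Union>L\<in>snd A ` V. T L)"
        unfolding T_def S_def detects_def by blast
    qed
    have finT: "finite (T L)" for L
      by (rule finite_subset[of _ "Pow {1..n}"]) (auto simp: T_def)
    have cT: "card (T L) \<le> C" for L
    proof (cases "card L = l")
      case True
      then show ?thesis unfolding T_def C_def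
        using supersets_card[OF True assms(1) dn] by simp
    next
      case False
      then show ?thesis unfolding T_def by simp
    qed
    have "card {I\<in>S. A \<in> {A. detects l I (run_alg A I)}} \<le> card (\<Union>L\<in>snd A ` V. T L)"
      by (rule card_mono[OF _ sub]) (use finT finV in simp)
    also have "\<dots> \<le> (\<Sum>L\<in>snd A ` V. card (T L))"
      by (rule card_UN_le) (simp add: finV)
    also have "\<dots> \<le> card (snd A ` V) * C"
      using sum_bounded_above[of "snd A ` V" "\<lambda>L. card (T L)" C] cT by simp
    also have "\<dots> \<le> card V * C" by (intro mult_right_mono card_image_le finV) simp
    also have "\<dots> \<le> 2 ^ m * C" unfolding cV
      using num_tests A by (intro mult_right_mono power_increasing) auto
    finally show ?thesis by linarith
  qed
  have main: "real (card S) * (2/3) \<le> real (2 ^ m * C)"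
    by (rule avg_lemma[OF finS]) (use success bound in \<open>auto simp: S_def\<close>)
  have Cpos: "real C > 0" unfolding C_def using assms(1) dn by simp
  have rat: "(real n / real d) ^ l * real C \<le> real (n choose d)"
    unfolding C_def by (rule binom_ratio[OF assms(1) dn])
  have "(real n / real d) ^ l * real C * (2/3) \<le> 2 ^ m * real C"
    using main rat cardS by simp
  then have "((real n / real d) ^ l * (2/3)) * real C \<le> 2 ^ m * real C"
    by (simp add: ac_simps)
  then have "(real n / real d) ^ l * (2/3) \<le> 2 ^ m"
    using Cpos by (rule mult_right_le_imp_le)
  then have "(real n / real d) ^ l \<le> (3/2) * 2 ^ m" by linarith
  also have "\<dots> \<le> 2 ^ (m + 1)" by simp
  finally have pw: "(real n / real d) ^ l \<le> 2 ^ (m + 1)" .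
  have qpos: "real n / real d > 0" using dpos dn by simp
  have "real l * log 2 (real n / real d) = log 2 ((real n / real d) ^ l)"
    using qpos by (simp add: log_nat_power)
  also have "\<dots> \<le> log 2 (2 ^ (m + 1))"
    using pw qpos by (subst log_le_cancel_iff) auto
  also have "\<dots> = real (m + 1)" by (rule log_pow_cancel) simp_all
  finally show ?thesis by simp
qed

end
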